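(* Let $A$ be a countable non-empty set of players, $C$ a finite non-empty set of choices, $d:C^*\to A$, and for each $a\in A$ let $f_a:C^\omega\to[0,1]$ be upper semi-continuous (with respect to the product of discrete topologies on $C^\omega$). Then the infinite sequential game $\langle A,C,d,(f_a)_{a\in A}\rangle$ has a Nash equilibrium.
   Context: A strategy of $a$ is a function $s_a:d^{-1}(\{a\})\to C$; a profile is identified with $\sigma:C^*\to C$, inducing the play $p(\sigma)$ with $p_n=\sigma(p_{<n})$. $\sigma_{a\mapsto s_a}$ agrees with $s_a$ on $d^{-1}(\{a\})$ and with $\sigma$ elsewhere. $\sigma$ is a Nash equilibrium if there is no player $a$ and strategy $s_a$ with $f_a(p(\sigma))<f_a(p(\sigma_{a\mapsto s_a}))$. *)

theory Defs
  imports "HOL-Analysis.Analysis"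
begin

definition play_topology :: "(nat \<Rightarrow> 'c) topology" where
  "play_topology = product_topology (\<lambda>_. discrete_topology (UNIV :: 'c set)) UNIV"

definition upper_semicontinuous_map :: "'x topology \<Rightarrow> ('x \<Rightarrow> real) \<Rightarrow> bool" where
  "upper_semicontinuous_map X f \<longleftrightarrow> (\<forall>t. openin X {x \<in> topspace X. f x < t})"

fun hist :: "('c list \<Rightarrow> 'c) \<Rightarrow> nat \<Rightarrow> 'c list" where
  "hist \<sigma> 0 = []"
| "hist \<sigma> (Suc n) = hist \<sigma> n @ [\<sigma> (hist \<sigma> n)]"

definition play :: "('c list \<Rightarrow> 'c) \<Rightarrow> nat \<Rightarrow> 'c" where
  "play \<sigma> n = \<sigma> (hist \<sigma> n)"

definition deviate :: "('c list \<Rightarrow> 'a) \<Rightarrow> ('c list \<Rightarrow> 'c) \<Rightarrow> 'a \<Rightarrow> ('c list \<Rightarrow> 'c) \<Rightarrow> ('c list \<Rightarrow> 'c)" where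
  "deviate d \<sigma> a s = (\<lambda>h. if d h = a then s h else \<sigma> h)"

definition nash_equilibrium ::
  "('c list \<Rightarrow> 'a) \<Rightarrow> ('a \<Rightarrow> (nat \<Rightarrow> 'c) \<Rightarrow> real) \<Rightarrow> ('c list \<Rightarrow> 'c) \<Rightarrow> bool" where
  "nash_equilibrium d f \<sigma> \<longleftrightarrow>
     \<not> (\<exists>a s. f a (play \<sigma>) < f a (play (deviate d \<sigma> a s)))"

end

theory Submission
  imports Defs
begin


definition pref :: "(nat \<Rightarrow> 'c) \<Rightarrow> nat \<Rightarrow> 'c list" where
  "pref q n = map q [0..<n]"

definition ext :: "'c list \<Rightarrow> (nat \<Rightarrow> 'c) \<Rightarrow> bool" where
  "ext g q \<longleftrightarrow> (\<forall>i<length g. q i = g ! i)"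

lemma length_pref[simp]: "length (pref q n) = n"
  by (simp add: pref_def)

lemma pref_nth[simp]: "i < n \<Longrightarrow> pref q n ! i = q i"
  by (simp add: pref_def)

lemma pref_0[simp]: "pref q 0 = []"
  by (simp add: pref_def)

lemma pref_Suc: "pref q (Suc n) = pref q n @ [q n]"
  by (simp add: pref_def)

lemma ext_pref: "ext (pref q n) q' \<longleftrightarrow> (\<forall>i<n. q' i = q i)"
  by (simp add: ext_def)

lemma ext_pref_self[simp]: "ext (pref q n) q"
  by (simp add: ext_def)

lemma ext_Nil[simp]: "ext [] q"
  by (simp add: ext_def)

lemma ext_imp_pref: "ext g q \<Longrightarrow> pref q (length g) = g"
  by (auto simp: ext_def intro!: nth_equalityI)

lemma ext_snoc: "ext (g @ [c]) q \<longleftrightarrow> ext g q \<and> q (length g) = c"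
  by (auto simp: ext_def nth_append less_Suc_eq)

lemma take_pref: "m \<le> n \<Longrightarrow> take m (pref q n) = pref q m"
  by (auto intro!: nth_equalityI)


lemma pref_eq_iff: "pref q n = pref q' n \<longleftrightarrow> (\<forall>i<n. q i = q' i)"
  by (auto simp: list_eq_iff_nth_eq)

lemma usc_cyl:
  assumes "upper_semicontinuous_map play_topology (F :: (nat \<Rightarrow> 'c) \<Rightarrow> real)" "F q < t"
  shows "\<exists>n. \<forall>q'. (\<forall>i<n. q' i = q i) \<longrightarrow> F q' < t"
proof -
  have top: "topspace (play_topology :: (nat \<Rightarrow> 'c) topology) = UNIV"
    by (simp add: play_topology_def)
  have "openin play_topology {x \<in> topspace play_topology. F x < t}"
    using assms(1) unfolding upper_semicontinuous_map_def by blast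
  then have op: "openin (product_topology (\<lambda>_. discrete_topology (UNIV :: 'c set)) UNIV) {x. F x < t}"
    using top by (simp add: play_topology_def)
  have "q \<in> {x. F x < t}" using assms(2) by simp
  note bspec[OF op[unfolded openin_product_topology_alt] this]
  then obtain U where U: "finite {i \<in> UNIV. U i \<noteq> topspace (discrete_topology (UNIV :: 'c set))}"
    "q \<in> Pi\<^sub>E UNIV U" "Pi\<^sub>E UNIV U \<subseteq> {x. F x < t}"
    by (elim exE conjE) blast
  have fin: "finite {i. U i \<noteq> UNIV}" using U(1) by simp
  obtain n where n: "{i. U i \<noteq> UNIV} \<subseteq> {..<n}"
    using finite_nat_bounded[OF fin] by (elim exE)
  show ?thesis
  proof (intro exI allI impI)
    fix q' :: "nat \<Rightarrow> 'c" assume h: "\<forall>i<n. q' i = q i"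
    have "q' \<in> Pi\<^sub>E UNIV U"
    proof (simp add: PiE_iff, intro allI)
      fix i show "q' i \<in> U i"
      proof (cases "i < n")
        case True then show ?thesis using h U(2) by (simp add: PiE_iff)
      next
        case False then have "i \<notin> {i. U i \<noteq> UNIV}" using n by auto
        then have "U i = UNIV" by simp
        then show ?thesis by simp
      qed
    qed
    then show "F q' < t" using U(3) by auto
  qed
qed

definition cons :: "('c list \<Rightarrow> bool) \<Rightarrow> ('c list \<Rightarrow> 'c) \<Rightarrow> 'c list \<Rightarrow> (nat \<Rightarrow> 'c) \<Rightarrow> bool" where
  "cons P \<sigma> g q \<longleftrightarrow> ext g q \<and> (\<forall>j\<ge>length g. P (pref q j) \<longrightarrow> q j = \<sigma> (pref q j))"

definition W :: "('c list \<Rightarrow> bool) \<Rightarrow> ((nat \<Rightarrow> 'c) \<Rightarrow> bool) \<Rightarrow> 'c list \<Rightarrow> bool" where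
  "W P R g \<longleftrightarrow> (\<exists>\<sigma>. \<forall>q. cons P \<sigma> g q \<longrightarrow> R q)"

lemma cons_later: "cons P \<sigma> g q \<Longrightarrow> length g \<le> k \<Longrightarrow> cons P \<sigma> (pref q k) q"
  by (simp add: cons_def)

lemma cons_move:
  assumes "P g" "cons P (\<sigma>(g := c)) g q"
  shows "cons P \<sigma> (g @ [c]) q"
proof -
  have e: "ext g q" using assms(2) by (simp add: cons_def)
  then have pg: "pref q (length g) = g" by (rule ext_imp_pref)
  have "q (length g) = c" using assms pg unfolding cons_def by (metis fun_upd_same order_refl)
  then have "ext (g @ [c]) q" using e by (simp add: ext_snoc)
  moreover have "\<forall>j\<ge>length (g @ [c]). P (pref q j) \<longrightarrow> q j = \<sigma> (pref q j)"
  proof (intro allI impI)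
    fix j assume j: "length (g @ [c]) \<le> j" "P (pref q j)"
    then have "pref q j \<noteq> g" by (metis length_pref length_append_singleton not_less_eq_eq order_refl)
    then show "q j = \<sigma> (pref q j)" using assms(2) j unfolding cons_def by auto
  qed
  ultimately show ?thesis by (simp add: cons_def)
qed

lemma W_move: "P g \<Longrightarrow> W P R (g @ [c]) \<Longrightarrow> W P R g"
proof -
  assume P: "P g" and "W P R (g @ [c])"
  then obtain \<sigma> where s: "\<forall>q. cons P \<sigma> (g @ [c]) q \<longrightarrow> R q" unfolding W_def by blast
  show "W P R g" unfolding W_def
  proof (rule exI[of _ "\<sigma>(g := c)"], intro allI impI)
    fix q assume "cons P (\<sigma>(g := c)) g q"
    then have "cons P \<sigma> (g @ [c]) q" by (rule cons_move[where P=P and g=g, OF P])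
    then show "R q" using s by blast
  qed
qed

lemma cons_comb:
  assumes "\<not> P g" "cons P (\<lambda>x. T (x ! length g) x) g q"
  shows "cons P (T (q (length g))) (g @ [q (length g)]) q"
proof -
  have e: "ext g q" using assms(2) by (simp add: cons_def)
  then have "ext (g @ [q (length g)]) q" by (simp add: ext_snoc)
  moreover have "\<forall>j\<ge>length (g @ [q (length g)]). P (pref q j) \<longrightarrow> q j = T (q (length g)) (pref q j)"
  proof (intro allI impI)
    fix j assume j: "length (g @ [q (length g)]) \<le> j" "P (pref q j)"
    then have "pref q j ! length g = q (length g)" by simp
    then show "q j = T (q (length g)) (pref q j)" using assms(2) j unfolding cons_def by auto
  qed
  ultimately show ?thesis by (simp add: cons_def)
qed

lemma W_comb:
  assumes "\<not> P g" "\<forall>c. W P R (g @ [c])"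
  shows "W P R g"
proof -
  have "\<forall>c. \<exists>\<sigma>. \<forall>q. cons P \<sigma> (g @ [c]) q \<longrightarrow> R q" using assms(2) by (simp add: W_def)
  from choice[OF this] obtain T where T: "\<forall>c. \<forall>q. cons P (T c) (g @ [c]) q \<longrightarrow> R q" by blast
  show ?thesis unfolding W_def
  proof (rule exI[of _ "\<lambda>x. T (x ! length g) x"], intro allI impI)
    fix q assume "cons P (\<lambda>x. T (x ! length g) x) g q"
    then have "cons P (T (q (length g))) (g @ [q (length g)]) q" by (rule cons_comb[where P=P and g=g, OF assms(1)])
    then show "R q" using T by blast
  qed
qed

lemma cons_restr:
  assumes "\<not> P g" "cons P \<sigma> (g @ [c]) q"
  shows "cons P \<sigma> g q"
proof -
  have e: "ext g q" using assms(2) by (simp add: cons_def ext_snoc)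
  then have pg: "pref q (length g) = g" by (rule ext_imp_pref)
  show ?thesis unfolding cons_def
  proof (intro conjI allI impI)
    fix j assume j: "length g \<le> j" "P (pref q j)"
    then have "j \<noteq> length g" using pg assms(1) by auto
    then show "q j = \<sigma> (pref q j)" using j assms(2) unfolding cons_def by auto
  qed (rule e)
qed

lemma W_restr: "\<not> P g \<Longrightarrow> W P R g \<Longrightarrow> W P R (g @ [c])"
proof -
  assume P: "\<not> P g" and "W P R g"
  then obtain \<sigma> where s: "\<forall>q. cons P \<sigma> g q \<longrightarrow> R q" unfolding W_def by blast
  show "W P R (g @ [c])" unfolding W_def
  proof (rule exI[of _ \<sigma>], intro allI impI)
    fix q assume "cons P \<sigma> (g @ [c]) q"
    then have "cons P \<sigma> g q" by (rule cons_restr[where P=P and g=g, OF P])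
    then show "R q" using s by blast
  qed
qed

lemma cons_restr2:
  assumes "P h" "cons P \<sigma> (h @ [\<sigma> h]) q"
  shows "cons P \<sigma> h q"
proof -
  have e: "ext h q" and qh: "q (length h) = \<sigma> h" using assms(2) by (simp_all add: cons_def ext_snoc)
  from e have pg: "pref q (length h) = h" by (rule ext_imp_pref)
  show ?thesis unfolding cons_def
  proof (intro conjI allI impI)
    fix j assume j: "length h \<le> j" "P (pref q j)"
    show "q j = \<sigma> (pref q j)"
    proof (cases "j = length h")
      case True then show ?thesis using qh pg by simp
    next
      case False then show ?thesis using j assms(2) unfolding cons_def by auto
    qed
  qed (rule e)
qed

fun hf :: "('c list \<Rightarrow> 'c) \<Rightarrow> 'c list \<Rightarrow> nat \<Rightarrow> 'c list" where
  "hf \<rho> g 0 = g"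
| "hf \<rho> g (Suc n) = hf \<rho> g n @ [\<rho> (hf \<rho> g n)]"

lemma length_hf[simp]: "length (hf \<rho> g n) = length g + n"
  by (induction n) auto

lemma take_hf: "n \<le> m \<Longrightarrow> take (length g + n) (hf \<rho> g m) = hf \<rho> g n"
proof (induction m)
  case 0 then show ?case by simp
next
  case (Suc m)
  show ?case
  proof (cases "n = Suc m")
    case True then show ?thesis by simp
  next
    case False then have "n \<le> m" using Suc.prems by simp
    then show ?thesis using Suc.IH by simp
  qed
qed

definition pl :: "('c list \<Rightarrow> 'c) \<Rightarrow> 'c list \<Rightarrow> nat \<Rightarrow> 'c" where
  "pl \<rho> g i = hf \<rho> g (Suc i) ! i"

lemma hf_nth: "i < length g + n \<Longrightarrow> hf \<rho> g n ! i = pl \<rho> g i"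
proof -
  assume i: "i < length g + n"
  define m where "m = max n (Suc i)"
  have t1: "take (length g + n) (hf \<rho> g m) = hf \<rho> g n" by (rule take_hf) (simp add: m_def)
  have t2: "take (length g + Suc i) (hf \<rho> g m) = hf \<rho> g (Suc i)" by (rule take_hf) (simp add: m_def)
  have "hf \<rho> g n ! i = take (length g + n) (hf \<rho> g m) ! i" using t1 by simp
  also have "\<dots> = hf \<rho> g m ! i" using i by simp
  also have "\<dots> = take (length g + Suc i) (hf \<rho> g m) ! i" by simp
  also have "\<dots> = hf \<rho> g (Suc i) ! i" using t2 by simp
  finally show ?thesis by (simp add: pl_def)
qed

lemma pref_pl: "pref (pl \<rho> g) (length g + n) = hf \<rho> g n"
  by (rule nth_equalityI) (auto simp: hf_nth)

lemma ext_pl: "ext g (pl \<rho> g)"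
  unfolding ext_def using hf_nth[of _ g 0 \<rho>] by simp

lemma pl_step: "length g \<le> j \<Longrightarrow> pl \<rho> g j = \<rho> (pref (pl \<rho> g) j)"
proof -
  assume j: "length g \<le> j"
  define n where "n = j - length g"
  have jn: "j = length g + n" using j n_def by simp
  have "pl \<rho> g j = hf \<rho> g (Suc n) ! j" using hf_nth[of j g "Suc n" \<rho>] jn by simp
  also have "\<dots> = \<rho> (hf \<rho> g n)" using jn by (simp add: nth_append)
  also have "\<dots> = \<rho> (pref (pl \<rho> g) j)" using pref_pl[of \<rho> g n] jn by simp
  finally show ?thesis .
qed

lemma exists_play_both:
  "\<exists>q. cons P \<sigma> g q \<and> cons (\<lambda>x. \<not> P x) \<tau> g q"
proof -
  define \<rho> where "\<rho> = (\<lambda>x. if P x then \<sigma> x else \<tau> x)"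
  show ?thesis
    by (rule exI[of _ "pl \<rho> g"]) (auto simp: cons_def ext_pl pl_step \<rho>_def)
qed



lemma uniformize:
  "\<exists>S. \<forall>g. W P R g \<longrightarrow> (\<forall>q. cons P S g q \<longrightarrow> R q)"
proof -
  define St where "St g = (SOME \<sigma>. \<forall>q. cons P \<sigma> g q \<longrightarrow> R q)" for g
  have St: "R q" if "W P R g" "cons P (St g) g q" for g q
  proof -
    from that(1) obtain \<sigma> where "\<forall>q. cons P \<sigma> g q \<longrightarrow> R q" unfolding W_def by blast
    then have "\<forall>q. cons P (St g) g q \<longrightarrow> R q" unfolding St_def
      by (rule someI[where P="\<lambda>\<sigma>. \<forall>q. cons P \<sigma> g q \<longrightarrow> R q"])
    then show ?thesis using that(2) by blast
  qed
  define ok where "ok x j \<longleftrightarrow> j \<le> length x \<and> W P R (take j x) \<and>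
      (\<forall>i. j \<le> i \<and> i < length x \<and> P (take i x) \<longrightarrow> x ! i = St (take j x) (take i x))" for x j
  define S where "S x = (if \<exists>j. ok x j then St (take (LEAST j. ok x j) x) x else undefined)" for x
  have okp: "ok (pref q k) j \<longleftrightarrow> j \<le> k \<and> W P R (pref q j) \<and>
      (\<forall>i. j \<le> i \<and> i < k \<and> P (pref q i) \<longrightarrow> q i = St (pref q j) (pref q i))" for q k j
  proof -
    have e1: "take j (pref q k) = pref q j" if "j \<le> k" using that by (rule take_pref)
    show ?thesis
    proof
      assume "ok (pref q k) j"
      then have jk: "j \<le> k" and w: "W P R (take j (pref q k))" and
        a: "\<forall>i. j \<le> i \<and> i < k \<and> P (take i (pref q k)) \<longrightarrow> pref q k ! i = St (take j (pref q k)) (take i (pref q k))"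
        unfolding ok_def by auto
      have "\<forall>i. j \<le> i \<and> i < k \<and> P (pref q i) \<longrightarrow> q i = St (pref q j) (pref q i)"
      proof (intro allI impI)
        fix i assume i: "j \<le> i \<and> i < k \<and> P (pref q i)"
        then have "take i (pref q k) = pref q i" by (simp add: take_pref)
        then show "q i = St (pref q j) (pref q i)" using a i e1[OF jk] by auto
      qed
      then show "j \<le> k \<and> W P R (pref q j) \<and> (\<forall>i. j \<le> i \<and> i < k \<and> P (pref q i) \<longrightarrow> q i = St (pref q j) (pref q i))"
        using jk w e1[OF jk] by simp
    next
      assume r: "j \<le> k \<and> W P R (pref q j) \<and> (\<forall>i. j \<le> i \<and> i < k \<and> P (pref q i) \<longrightarrow> q i = St (pref q j) (pref q i))"
      then have jk: "j \<le> k" by simp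
      have "\<forall>i. j \<le> i \<and> i < k \<and> P (take i (pref q k)) \<longrightarrow> pref q k ! i = St (take j (pref q k)) (take i (pref q k))"
      proof (intro allI impI)
        fix i assume i: "j \<le> i \<and> i < k \<and> P (take i (pref q k))"
        then have "take i (pref q k) = pref q i" by (simp add: take_pref)
        then show "pref q k ! i = St (take j (pref q k)) (take i (pref q k))" using r i e1[OF jk] by auto
      qed
      then show "ok (pref q k) j" unfolding ok_def using r e1[OF jk] by simp
    qed
  qed
  show ?thesis
  proof (rule exI[of _ S], intro allI impI)
    fix g q assume Wg: "W P R g" and c: "cons P S g q"
    have pg: "pref q (length g) = g" using c by (simp add: cons_def ext_imp_pref)
    define j0 where "j0 = (LEAST j. ok (pref q (length g)) j)"
    have ok0: "ok (pref q (length g)) (length g)" using okp[of q "length g" "length g"] Wg pg by auto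
    have inv: "ok (pref q (length g + n)) j0 \<and> (\<forall>j. ok (pref q (length g + n)) j \<longrightarrow> j0 \<le> j)" for n
    proof (induction n)
      case 0
      show ?case using ok0 j0_def by (auto intro: LeastI Least_le)
    next
      case (Suc n)
      define k where "k = length g + n"
      have IH1: "ok (pref q k) j0" and IH2: "\<forall>j. ok (pref q k) j \<longrightarrow> j0 \<le> j" using Suc.IH k_def by auto
      have L: "(LEAST j. ok (pref q k) j) = j0" using IH1 IH2 by (intro Least_equality) auto
      have step: "P (pref q k) \<Longrightarrow> q k = St (pref q j0) (pref q k)"
      proof -
        assume "P (pref q k)"
        then have "q k = S (pref q k)" using c k_def unfolding cons_def by auto
        also have "\<dots> = St (take j0 (pref q k)) (pref q k)" using IH1 L unfolding S_def by auto
        also have "\<dots> = St (pref q j0) (pref q k)" using IH1 okp by (simp add: take_pref)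
        finally show ?thesis .
      qed
      have A: "ok (pref q (Suc k)) j0"
        using IH1 step unfolding okp by (auto simp: less_Suc_eq)
      have B: "\<forall>j. ok (pref q (Suc k)) j \<longrightarrow> j0 \<le> j"
      proof (intro allI impI)
        fix j assume "ok (pref q (Suc k)) j"
        then have "j \<le> Suc k" and o: "W P R (pref q j)"
          "\<forall>i. j \<le> i \<and> i < Suc k \<and> P (pref q i) \<longrightarrow> q i = St (pref q j) (pref q i)"
          unfolding okp by auto
        show "j0 \<le> j"
        proof (cases "j \<le> k")
          case True
          then have "ok (pref q k) j" using o unfolding okp by auto
          then show ?thesis using IH2 by blast
        next
          case False then show ?thesis using IH1 okp by auto
        qed
      qed
      show ?case using A B k_def by simp
    qed
    have "cons P (St (pref q j0)) (pref q j0) q"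
      unfolding cons_def
    proof (intro conjI allI impI)
      fix i assume i: "length (pref q j0) \<le> i" "P (pref q i)"
      have "ok (pref q (length g + Suc i)) j0" using inv by blast
      then show "q i = St (pref q j0) (pref q i)" using i unfolding okp by auto
    qed simp
    moreover have "W P R (pref q j0)" using inv[of 0] okp by auto
    ultimately show "R q" using St by blast
  qed
qed



locale game =
  fixes d :: "'c::finite list \<Rightarrow> 'a" and f :: "'a \<Rightarrow> (nat \<Rightarrow> 'c) \<Rightarrow> real"
  assumes usc: "\<And>a. upper_semicontinuous_map play_topology (f a)"
begin

definition Pun :: "'a \<Rightarrow> 'c list \<Rightarrow> real \<Rightarrow> bool" where
  "Pun a g v = W (\<lambda>x. d x \<noteq> a) (\<lambda>q. f a q \<le> v) g"

definition AWin :: "'a \<Rightarrow> 'c list \<Rightarrow> real \<Rightarrow> bool" where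
  "AWin a g w = W (\<lambda>x. d x = a) (\<lambda>q. w < f a q) g"

definition Small :: "'a \<Rightarrow> 'c list \<Rightarrow> real \<Rightarrow> bool" where
  "Small a g t \<longleftrightarrow> (\<forall>q. ext g q \<longrightarrow> f a q < t)"

lemma small_ex: "f a q < t \<Longrightarrow> \<exists>n. Small a (pref q n) t"
  using usc_cyl[OF usc] unfolding Small_def ext_pref by blast

lemma small_ext: "Small a (pref q n) t \<Longrightarrow> n \<le> m \<Longrightarrow> Small a (pref q m) t"
  unfolding Small_def ext_pref by auto

lemma small_snoc: "Small a g t \<Longrightarrow> Small a (g @ [c]) t"
  unfolding Small_def by (auto simp: ext_snoc)

lemma small_pun: "Small a g t \<Longrightarrow> Pun a g t"
  unfolding Pun_def W_def Small_def cons_def by (auto intro: less_imp_le)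

lemma pun_mono: "Pun a g v \<Longrightarrow> v \<le> v' \<Longrightarrow> Pun a g v'"
  unfolding Pun_def W_def by (meson order_trans)

lemma pun_awin_contra: "Pun a g w \<Longrightarrow> AWin a g w \<Longrightarrow> False"
proof -
  assume "Pun a g w" "AWin a g w"
  then obtain \<tau> s where t: "\<forall>q. cons (\<lambda>x. d x \<noteq> a) \<tau> g q \<longrightarrow> f a q \<le> w"
    and s: "\<forall>q. cons (\<lambda>x. d x = a) s g q \<longrightarrow> w < f a q"
    unfolding Pun_def AWin_def W_def by blast
  obtain q where "cons (\<lambda>x. d x = a) s g q" "cons (\<lambda>x. \<not> d x = a) \<tau> g q"
    using exists_play_both by blast
  then show False using t s by force
qed

lemma pun_child_co: "d g \<noteq> a \<Longrightarrow> Pun a (g @ [c]) v \<Longrightarrow> Pun a g v"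
  unfolding Pun_def using W_move[where P="\<lambda>x. d x \<noteq> a" and R="\<lambda>q. f a q \<le> v" and g=g and c=c] by simp

lemma pun_comb_a: "d g = a \<Longrightarrow> (\<forall>c. Pun a (g @ [c]) v) \<Longrightarrow> Pun a g v"
  unfolding Pun_def using W_comb[where P="\<lambda>x. d x \<noteq> a" and R="\<lambda>q. f a q \<le> v" and g=g] by simp

lemma pun_restr_a: "d g = a \<Longrightarrow> Pun a g v \<Longrightarrow> Pun a (g @ [c]) v"
  unfolding Pun_def using W_restr[where P="\<lambda>x. d x \<noteq> a" and R="\<lambda>q. f a q \<le> v" and g=g and c=c] by simp

lemma awin_child_a: "d g = a \<Longrightarrow> AWin a (g @ [c]) w \<Longrightarrow> AWin a g w"
  unfolding AWin_def using W_move[where P="\<lambda>x. d x = a" and R="\<lambda>q. w < f a q" and g=g and c=c] by simp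

lemma awin_comb_co: "d g \<noteq> a \<Longrightarrow> (\<forall>c. AWin a (g @ [c]) w) \<Longrightarrow> AWin a g w"
  unfolding AWin_def using W_comb[where P="\<lambda>x. d x = a" and R="\<lambda>q. w < f a q" and g=g] by simp

primrec Att :: "'a \<Rightarrow> real \<Rightarrow> real \<Rightarrow> nat \<Rightarrow> 'c list set" where
  "Att a w t 0 = {g. Small a g t}"
| "Att a w t (Suc n) = Att a w t n \<union> {g. (d g \<noteq> a \<and> (\<exists>c. \<not> AWin a (g @ [c]) w \<and> g @ [c] \<in> Att a w t n))
      \<or> (d g = a \<and> (\<forall>c. g @ [c] \<in> Att a w t n))}"

lemma Att_mono: "n \<le> m \<Longrightarrow> Att a w t n \<subseteq> Att a w t m"
  by (induction m rule: dec_induct) auto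

end


context game begin

lemma bad_in_att:
  assumes wt: "w < t" and bad: "\<not> AWin a g w"
  shows "\<exists>n. g \<in> Att a w t n"
proof (rule ccontr)
  assume NAg: "\<not> (\<exists>n. g \<in> Att a w t n)"
  define NA where "NA x \<longleftrightarrow> (\<forall>n. x \<notin> Att a w t n)" for x
  define S where "S y = (SOME s. \<forall>q. cons (\<lambda>x. d x = a) s y q \<longrightarrow> w < f a q)" for y
  have S: "w < f a q" if "AWin a y w" "cons (\<lambda>x. d x = a) (S y) y q" for y q
  proof -
    from that(1) obtain s where "\<forall>q. cons (\<lambda>x. d x = a) s y q \<longrightarrow> w < f a q"
      unfolding AWin_def W_def by blast
    then have "\<forall>q. cons (\<lambda>x. d x = a) (S y) y q \<longrightarrow> w < f a q" unfolding S_def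
      by (rule someI[where P="\<lambda>s. \<forall>q. cons (\<lambda>x. d x = a) s y q \<longrightarrow> w < f a q"])
    then show ?thesis using that(2) by blast
  qed
  define C where "C x j \<longleftrightarrow> length g \<le> j \<and> j \<le> length x \<and> AWin a (take j x) w" for x j
  define s where "s x = (if \<exists>j. C x j then S (take (LEAST j. C x j) x) x else (SOME c. NA (x @ [c])))" for x
  have Cp: "C (pref q k) j \<longleftrightarrow> length g \<le> j \<and> j \<le> k \<and> AWin a (pref q j) w" for q k j
    unfolding C_def by (auto simp: take_pref)
  have "AWin a g w" unfolding AWin_def W_def
  proof (rule exI[of _ s], intro allI impI)
    fix q assume c: "cons (\<lambda>x. d x = a) s g q"
    have pg: "pref q (length g) = g" using c by (simp add: cons_def ext_imp_pref)
    show "w < f a q"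
    proof (cases "\<exists>j. length g \<le> j \<and> AWin a (pref q j) w")
      case True
      define j0 where "j0 = (LEAST j. length g \<le> j \<and> AWin a (pref q j) w)"
      have j0: "length g \<le> j0" "AWin a (pref q j0) w"
        using LeastI_ex[OF True] j0_def by auto
      have j0min: "j0 \<le> j" if "length g \<le> j" "AWin a (pref q j) w" for j
        using that j0_def by (auto intro: Least_le)
      have L: "(LEAST j. C (pref q k) j) = j0" if "j0 \<le> k" for k
        by (rule Least_equality) (use that j0 j0min Cp in auto)
      have "cons (\<lambda>x. d x = a) (S (pref q j0)) (pref q j0) q"
        unfolding cons_def
      proof (intro conjI allI impI)
        fix i assume i: "length (pref q j0) \<le> i" "d (pref q i) = a"
        then have "q i = s (pref q i)" using c j0 unfolding cons_def by auto
        also have "\<dots> = S (take j0 (pref q i)) (pref q i)"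
          using L[of i] i j0 Cp[of q i j0] unfolding s_def by auto
        also have "\<dots> = S (pref q j0) (pref q i)" using i by (simp add: take_pref)
        finally show "q i = S (pref q j0) (pref q i)" .
      qed simp
      then show ?thesis using S j0 by blast
    next
      case False
      have NAall: "NA (pref q (length g + n))" for n
      proof (induction n)
        case 0 then show ?case using NAg pg NA_def by simp
      next
        case (Suc n)
        define x where "x = pref q (length g + n)"
        have NAx: "NA x" using Suc.IH x_def by simp
        have ps: "pref q (length g + Suc n) = x @ [q (length g + n)]" using x_def by (simp add: pref_Suc)
        show ?case
        proof (cases "d x = a")
          case True
          have nC: "\<not> (\<exists>j. C x j)" using False Cp x_def by auto
          have "q (length g + n) = s x" using c True x_def unfolding cons_def by auto
          also have "\<dots> = (SOME c. NA (x @ [c]))" by (simp only: s_def if_not_P[OF nC])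
          finally have qv: "q (length g + n) = (SOME c. NA (x @ [c]))" .
          have "\<exists>c. NA (x @ [c])"
          proof (rule ccontr)
            assume "\<not> (\<exists>c. NA (x @ [c]))"
            then have "\<forall>c. \<exists>n. x @ [c] \<in> Att a w t n" unfolding NA_def by blast
            from choice[OF this] obtain N where N: "\<forall>c. x @ [c] \<in> Att a w t (N c)" by blast
            define M where "M = Max (range N)"
            have "\<forall>c. x @ [c] \<in> Att a w t M"
              using N Att_mono[of "N _" M] unfolding M_def by (meson Max_ge finite UNIV_I image_eqI subsetD finite_imageI)
            then have "x \<in> Att a w t (Suc M)" using True by simp
            then show False using NAx NA_def by blast
          qed
          then have "NA (x @ [q (length g + n)])" unfolding qv by (rule someI_ex)
          then show ?thesis using ps by simp
        next
          case nT: False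
          have nW: "\<not> AWin a (x @ [q (length g + n)]) w" using False ps by (metis le_add1)
          have "NA (x @ [q (length g + n)])" unfolding NA_def
          proof
            fix m show "x @ [q (length g + n)] \<notin> Att a w t m"
            proof
              assume "x @ [q (length g + n)] \<in> Att a w t m"
              then have "x \<in> Att a w t (Suc m)" using nT nW by auto
              then show False using NAx NA_def by blast
            qed
          qed
          then show ?thesis using ps by simp
        qed
      qed
      show ?thesis
      proof (rule ccontr)
        assume "\<not> w < f a q"
        then have "f a q < t" using wt by simp
        then obtain n where "Small a (pref q n) t" using small_ex by blast
        then have "Small a (pref q (length g + n)) t" by (rule small_ext) simp
        then have "pref q (length g + n) \<in> Att a w t 0" by simp
        then show False using NAall NA_def by blast
      qed
    qed
  qed
  then show False using bad by simp
qed

end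


context game begin

lemma sigma2:
  assumes bad: "\<not> AWin a h w"
  shows "Pun a h w"
proof -
  define tk where "tk k = w + 1 / (real k + 1)" for k :: nat
  have tkw: "w < tk k" for k unfolding tk_def by (simp add: add_pos_pos)
  define rank where "rank k x = (LEAST n. x \<in> Att a w (tk k) n)" for k x
  define ph where "ph x = (LEAST k. \<not> Small a x (tk k))" for x
  define P where "P x c \<longleftrightarrow> \<not> AWin a (x @ [c]) w \<and> rank (ph x) (x @ [c]) < rank (ph x) x" for x c
  define \<tau> where "\<tau> x = (if \<exists>c. P x c then (SOME c. P x c) else (SOME c. \<not> AWin a (x @ [c]) w))" for x
  show ?thesis unfolding Pun_def W_def
  proof (rule exI[of _ \<tau>], intro allI impI)
    fix q assume c: "cons (\<lambda>x. d x \<noteq> a) \<tau> h q"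
    have ph0: "pref q (length h) = h" using c by (simp add: cons_def ext_imp_pref)
    have qstep: "q k = \<tau> (pref q k)" if "length h \<le> k" "d (pref q k) \<noteq> a" for k
      using c that unfolding cons_def by auto
    have badall: "\<not> AWin a (pref q (length h + n)) w" for n
    proof (induction n)
      case 0 then show ?case using bad ph0 by simp
    next
      case (Suc n)
      define x where "x = pref q (length h + n)"
      have ps: "pref q (length h + Suc n) = x @ [q (length h + n)]" using x_def by (simp add: pref_Suc)
      have bx: "\<not> AWin a x w" using Suc.IH x_def by simp
      show ?case
      proof (cases "d x = a")
        case True
        then show ?thesis using bx ps awin_child_a by metis
      next
        case False
        have ex: "\<exists>c. \<not> AWin a (x @ [c]) w" using awin_comb_co[OF False] bx by blast
        have "q (length h + n) = \<tau> x" using qstep[of "length h + n"] False x_def by simp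
        moreover have "\<not> AWin a (x @ [\<tau> x]) w"
        proof (cases "\<exists>c. P x c")
          case True
          then have "P x (SOME c. P x c)" by (rule someI_ex)
          then have "\<not> AWin a (x @ [SOME c. P x c]) w" unfolding P_def by simp
          then show ?thesis unfolding \<tau>_def if_P[OF True] .
        next
          case nP: False
          have "\<not> AWin a (x @ [SOME c. \<not> AWin a (x @ [c]) w]) w" using ex by (rule someI_ex)
          then show ?thesis unfolding \<tau>_def if_not_P[OF nP] .
        qed
        ultimately show ?thesis using ps by simp
      qed
    qed
    have badk: "\<not> AWin a (pref q k) w" if "length h \<le> k" for k
      using badall[of "k - length h"] that by simp
    show "f a q \<le> w"
    proof (rule ccontr)
      assume "\<not> f a q \<le> w"
      then have pos: "0 < f a q - w" by simp
      obtain n :: nat where n: "0 < n" "inverse (real n) < f a q - w"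
        using ex_inverse_of_nat_less[OF pos] by blast
      define K0 where "K0 = n - 1"
      have "tk K0 < f a q" using n unfolding tk_def K0_def by (simp add: field_simps)
      then have nsmall: "\<not> Small a (pref q k) (tk K0)" for k
        unfolding Small_def using ext_pref_self by fastforce
      have phnS: "\<not> Small a (pref q k) (tk (ph (pref q k)))" for k
        unfolding ph_def using nsmall by (rule LeastI)
      have phle: "ph (pref q k) \<le> K0" for k
        unfolding ph_def using nsmall by (rule Least_le)
      have phmono: "ph (pref q k) \<le> ph (pref q k')" if "k \<le> k'" for k k'
      proof -
        have "\<not> Small a (pref q k) (tk (ph (pref q k')))"
          using phnS[of k'] small_ext that by blast
        then show ?thesis unfolding ph_def[of "pref q k"] by (rule Least_le)
      qed
      define Ph where "Ph = (\<lambda>k. ph (pref q k)) ` {k. length h \<le> k}"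
      have finPh: "finite Ph" using phle unfolding Ph_def by (meson finite_atMost finite_subset image_subsetI atMost_iff)
      have nePh: "Ph \<noteq> {}" unfolding Ph_def by auto
      obtain J where J: "length h \<le> J" "ph (pref q J) = Max Ph"
        using Max_in[OF finPh nePh] unfolding Ph_def by auto
      define K where "K = ph (pref q J)"
      have phK: "ph (pref q k) = K" if "J \<le> k" for k
      proof -
        have "ph (pref q k) \<in> Ph" unfolding Ph_def using that J(1) by auto
        then have "ph (pref q k) \<le> K" using J(2) K_def finPh by simp
        moreover have "K \<le> ph (pref q k)" using phmono[OF that] K_def by simp
        ultimately show ?thesis by simp
      qed
      have dec: "rank K (pref q (Suc k)) < rank K (pref q k)" if "J \<le> k" for k
      proof -
        define x where "x = pref q k"
        have ps: "pref q (Suc k) = x @ [q k]" using x_def by (simp add: pref_Suc)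
        have bx: "\<not> AWin a x w" using badk J(1) that x_def by simp
        obtain m where "x \<in> Att a w (tk K) m" using bad_in_att[OF tkw bx] by blast
        then have xr: "x \<in> Att a w (tk K) (rank K x)" unfolding rank_def by (rule LeastI)
        have nS: "\<not> Small a x (tk K)" using phnS[of k] phK[OF that] x_def by simp
        have "rank K x \<noteq> 0" using xr nS by (metis Att.simps(1) mem_Collect_eq)
        then obtain r where r: "rank K x = Suc r" using not0_implies_Suc by blast
        have nr: "x \<notin> Att a w (tk K) r"
        proof
          assume "x \<in> Att a w (tk K) r"
          then have "rank K x \<le> r" unfolding rank_def by (rule Least_le)
          then show False using r by simp
        qed
        have cl: "(d x \<noteq> a \<and> (\<exists>c. \<not> AWin a (x @ [c]) w \<and> x @ [c] \<in> Att a w (tk K) r))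
            \<or> (d x = a \<and> (\<forall>c. x @ [c] \<in> Att a w (tk K) r))"
          using xr nr r by simp
        show ?thesis
        proof (cases "d x = a")
          case True
          then have "x @ [q k] \<in> Att a w (tk K) r" using cl by simp
          then have "rank K (x @ [q k]) \<le> r" unfolding rank_def by (rule Least_le)
          then show ?thesis using r ps x_def by simp
        next
          case False
          then obtain c0 where c0: "\<not> AWin a (x @ [c0]) w" "x @ [c0] \<in> Att a w (tk K) r" using cl by blast
          have "rank K (x @ [c0]) \<le> r" using c0(2) unfolding rank_def by (rule Least_le)
          then have Pc0: "P x c0" using c0(1) r phK[OF that] x_def unfolding P_def by simp
          then have "P x (SOME c. P x c)" by (rule someI)
          moreover have "q k = (SOME c. P x c)"
          proof -
            have ex: "\<exists>c. P x c" using Pc0 by blast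
            have "q k = \<tau> x" using qstep[of k] J(1) that False x_def by simp
            also have "\<dots> = (SOME c. P x c)" by (simp only: \<tau>_def if_P[OF ex])
            finally show ?thesis .
          qed
          ultimately show ?thesis using ps phK[OF that] x_def unfolding P_def by simp
        qed
      qed
      have desc: "rank K (pref q (J + i)) + i \<le> rank K (pref q J)" for i
      proof (induction i)
        case 0 then show ?case by simp
      next
        case (Suc i)
        have "rank K (pref q (Suc (J + i))) < rank K (pref q (J + i))" by (rule dec) simp
        then show ?case using Suc.IH by simp
      qed
      show False using desc[of "Suc (rank K (pref q J))"] by simp
    qed
  qed
qed

end


context game begin

lemma closed_choice:
  assumes "d h = a"
  shows "\<exists>c. \<forall>v. Pun a (h @ [c]) v \<longrightarrow> Pun a h v"
proof (rule ccontr)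
  assume "\<not> ?thesis"
  then have "\<forall>c. \<exists>v. Pun a (h @ [c]) v \<and> \<not> Pun a h v" by blast
  from choice[OF this] obtain V where V: "\<forall>c. Pun a (h @ [c]) (V c) \<and> \<not> Pun a h (V c)" by blast
  define M where "M = Max (range V)"
  have "M \<in> range V" unfolding M_def by (rule Max_in) auto
  then obtain c0 where c0: "V c0 = M" by auto
  have "\<forall>c. Pun a (h @ [c]) M"
  proof
    fix c have "V c \<le> M" unfolding M_def by (rule Max_ge) auto
    then show "Pun a (h @ [c]) M" using V pun_mono by blast
  qed
  then have "Pun a h M" using pun_comb_a[OF assms] by blast
  then show False using V c0 by metis
qed

lemma uniform_strategy:
  "\<exists>s. \<forall>q. cons (\<lambda>x. d x = a) s [] q \<longrightarrow> (\<forall>k. Pun a (pref q k) (f a q))"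
proof -
  have "\<forall>w. \<exists>S. \<forall>g. AWin a g w \<longrightarrow> (\<forall>q. cons (\<lambda>x. d x = a) S g q \<longrightarrow> w < f a q)"
    unfolding AWin_def using uniformize by blast
  from choice[OF this] obtain Sw where
    Sw: "\<And>w g q. AWin a g w \<Longrightarrow> cons (\<lambda>x. d x = a) (Sw w) g q \<Longrightarrow> w < f a q" by blast
  define isopen where "isopen h w \<longleftrightarrow> \<not> Pun a h w \<and> (\<forall>v>w. Pun a h v)" for h w
  have open_unique: "w = w'" if "isopen h w" "isopen h w'" for h w w'
  proof (rule ccontr)
    assume "w \<noteq> w'"
    then have "w < w' \<or> w' < w" by linarith
    then show False using that unfolding isopen_def by blast
  qed
  define s where "s h = (if \<exists>w. isopen h w then Sw (SOME w. isopen h w) h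
                         else (SOME c. \<forall>v. Pun a (h @ [c]) v \<longrightarrow> Pun a h v))" for h
  have awin_of: "AWin a h w" if "\<not> Pun a h w" for h w
    using sigma2 that by blast
  have claimA: "Pun a h v" if "d h = a" "Pun a (h @ [s h]) v" for h v
  proof (cases "\<exists>w. isopen h w")
    case True
    define w0 where "w0 = (SOME w. isopen h w)"
    have o: "isopen h w0" unfolding w0_def using True by (rule someI_ex)
    have sh: "s h = Sw w0 h" unfolding s_def w0_def using True by simp
    have Ah: "AWin a h w0" using o awin_of unfolding isopen_def by blast
    have Ac: "AWin a (h @ [s h]) w0" unfolding AWin_def W_def
    proof (rule exI[of _ "Sw w0"], intro allI impI)
      fix q assume "cons (\<lambda>x. d x = a) (Sw w0) (h @ [s h]) q"
      then have cc: "cons (\<lambda>x. d x = a) (Sw w0) (h @ [Sw w0 h]) q" using sh by simp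
      have "cons (\<lambda>x. d x = a) (Sw w0) h q"
        by (rule cons_restr2[where P="\<lambda>x. d x = a", OF _ cc]) (simp add: that(1))
      then show "w0 < f a q" using Sw Ah by blast
    qed
    have "w0 < v"
    proof (rule ccontr)
      assume "\<not> w0 < v"
      then have "Pun a (h @ [s h]) w0" using that(2) pun_mono by simp
      then show False using Ac pun_awin_contra by blast
    qed
    then show ?thesis using o unfolding isopen_def by blast
  next
    case False
    have "\<forall>v. Pun a (h @ [SOME c. \<forall>v. Pun a (h @ [c]) v \<longrightarrow> Pun a h v]) v \<longrightarrow> Pun a h v"
      using closed_choice[OF that(1)] by (rule someI_ex)
    moreover have "s h = (SOME c. \<forall>v. Pun a (h @ [c]) v \<longrightarrow> Pun a h v)"
      unfolding s_def if_not_P[OF False] ..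
    ultimately show ?thesis using that(2) by metis
  qed
  show ?thesis
  proof (rule exI[of _ s], intro allI impI)
    fix q assume c: "cons (\<lambda>x. d x = a) s [] q"
    have qs: "q k = s (pref q k)" if "d (pref q k) = a" for k
      using c that unfolding cons_def by auto
    have claimB: "Pun a (pref q k) v" if "k \<le> k'" "Pun a (pref q k') v" for k k' v
      using that
    proof (induction k' rule: dec_induct)
      case base then show ?case .
    next
      case (step m)
      have ps: "pref q (Suc m) = pref q m @ [q m]" by (simp add: pref_Suc)
      show ?case
      proof (cases "d (pref q m) = a")
        case True
        then have "Pun a (pref q m @ [s (pref q m)]) v" using step.prems ps qs by simp
        then have "Pun a (pref q m) v" using claimA True by blast
        then show ?thesis using step.IH by blast
      next
        case False
        then have "Pun a (pref q m) v" using pun_child_co step.prems ps by metis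
        then show ?thesis using step.IH by blast
      qed
    qed
    show "Pun a (pref q k) (f a q)" for k
    proof (rule ccontr)
      assume nk: "\<not> Pun a (pref q k) (f a q)"
      define w where "w = f a q"
      have nP: "\<not> Pun a (pref q n) w" if "k \<le> n" for n
        using claimB[OF that] nk w_def by blast
      have allP: "Pun a (pref q n) t" if wt: "w < t" for n t
      proof -
        obtain m where "Small a (pref q m) t" using small_ex[of a q t] wt w_def by blast
        then have "Small a (pref q (max m n)) t" by (rule small_ext) simp
        then have "Pun a (pref q (max m n)) t" by (rule small_pun)
        then show ?thesis using claimB[of n "max m n"] by simp
      qed
      have op: "isopen (pref q n) w" if "k \<le> n" for n
        unfolding isopen_def using nP[OF that] allP by blast
      have sn: "s (pref q n) = Sw w (pref q n)" if "k \<le> n" for n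
      proof -
        have ex: "\<exists>w. isopen (pref q n) w" using op[OF that] by blast
        have "(SOME w. isopen (pref q n) w) = w"
          using open_unique op[OF that] someI_ex[OF ex] by blast
        then show ?thesis unfolding s_def using ex by simp
      qed
      have "cons (\<lambda>x. d x = a) (Sw w) (pref q k) q"
        unfolding cons_def
      proof (intro conjI allI impI)
        fix j assume j: "length (pref q k) \<le> j" "d (pref q j) = a"
        then show "q j = Sw w (pref q j)" using qs sn by simp
      qed simp
      moreover have "AWin a (pref q k) w" using awin_of nP by blast
      ultimately have "w < f a q" using Sw by blast
      then show False using w_def by simp
    qed
  qed
qed

end


lemma hist_pref: "hist \<sigma> n = pref (play \<sigma>) n"
  by (induction n) (simp_all add: pref_Suc play_def)

lemma play_step: "play \<sigma> n = \<sigma> (pref (play \<sigma>) n)"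
  by (simp add: play_def hist_pref)

context game begin

lemma nash_exists: "\<exists>\<sigma>. nash_equilibrium d f \<sigma>"
proof -
  have "\<forall>a. \<exists>s. \<forall>q. cons (\<lambda>x. d x = a) s [] q \<longrightarrow> (\<forall>k. Pun a (pref q k) (f a q))"
    using uniform_strategy by blast
  from choice[OF this] obtain S where
    S: "\<And>a q. cons (\<lambda>x. d x = a) (S a) [] q \<Longrightarrow> (\<forall>k. Pun a (pref q k) (f a q))" by blast
  define \<sigma>0 where "\<sigma>0 x = S (d x) x" for x
  define p where "p = play \<sigma>0"
  have PunP: "Pun a (pref p k) (f a p)" for a k
  proof -
    have "cons (\<lambda>x. d x = a) (S a) [] p"
      unfolding cons_def
    proof (intro conjI allI impI)
      fix j assume "length [] \<le> j" "d (pref p j) = a"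
      then show "p j = S a (pref p j)" unfolding p_def using play_step[of \<sigma>0 j] \<sigma>0_def by simp
    qed simp
    then show ?thesis using S by blast
  qed
  define Tg where "Tg g = (SOME \<tau>. \<forall>q. cons (\<lambda>x. d x \<noteq> d (butlast g)) \<tau> g q
        \<longrightarrow> f (d (butlast g)) q \<le> f (d (butlast g)) p)" for g
  define \<sigma> where "\<sigma> x = (if x = pref p (length x) then p (length x)
      else Tg (take (Suc (LEAST i. i < length x \<and> x ! i \<noteq> p i)) x) x)" for x
  have \<sigma>p: "\<sigma> (pref p n) = p n" for n unfolding \<sigma>_def by simp
  have histp: "hist \<sigma> n = pref p n" for n
    by (induction n) (simp_all add: pref_Suc \<sigma>p)
  have playp: "play \<sigma> = p" by (rule ext) (simp add: play_def histp \<sigma>p)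
  show ?thesis
  proof (rule exI[of _ \<sigma>])
    show "nash_equilibrium d f \<sigma>"
      unfolding nash_equilibrium_def playp
    proof (intro notI, elim exE)
      fix a s0 assume lt: "f a p < f a (play (deviate d \<sigma> a s0))"
      define q where "q = play (deviate d \<sigma> a s0)"
      have qs: "q j = deviate d \<sigma> a s0 (pref q j)" for j unfolding q_def by (rule play_step)
      have "q \<noteq> p" using lt q_def by auto
      then have exn: "\<exists>n. q n \<noteq> p n" by auto
      define n0 where "n0 = (LEAST n. q n \<noteq> p n)"
      have n0: "q n0 \<noteq> p n0" using LeastI_ex[OF exn] n0_def by simp
      have n0min: "n0 \<le> i" if "q i \<noteq> p i" for i using that n0_def by (auto intro: Least_le)
      have pre: "pref q n0 = pref p n0" unfolding pref_eq_iff using n0min by (meson not_le)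
      have da: "d (pref p n0) = a"
      proof (rule ccontr)
        assume "d (pref p n0) \<noteq> a"
        then have "q n0 = \<sigma> (pref p n0)" using qs[of n0] pre by (simp add: deviate_def)
        then show False using n0 \<sigma>p by simp
      qed
      define g where "g = pref q (Suc n0)"
      have g: "g = pref p n0 @ [q n0]" using g_def pre by (simp add: pref_Suc)
      have bg: "butlast g = pref p n0" using g by simp
      have "Pun a g (f a p)" using pun_restr_a[OF da PunP] g by simp
      then have "\<exists>\<tau>. \<forall>q. cons (\<lambda>x. d x \<noteq> a) \<tau> g q \<longrightarrow> f a q \<le> f a p"
        unfolding Pun_def W_def .
      then have T: "\<forall>q. cons (\<lambda>x. d x \<noteq> a) (Tg g) g q \<longrightarrow> f a q \<le> f a p"
        unfolding Tg_def bg da by (rule someI_ex)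
      have "cons (\<lambda>x. d x \<noteq> a) (Tg g) g q"
        unfolding cons_def
      proof (intro conjI allI impI)
        show "ext g q" unfolding g_def by simp
      next
        fix j assume j: "length g \<le> j" "d (pref q j) \<noteq> a"
        have jn: "n0 < j" using j g_def by simp
        have "q j = \<sigma> (pref q j)" using qs[of j] j by (simp add: deviate_def)
        moreover have "pref q j \<noteq> pref p (length (pref q j))"
          using jn n0 by (auto simp: pref_eq_iff)
        moreover have "(LEAST i. i < length (pref q j) \<and> pref q j ! i \<noteq> p i) = n0"
          by (rule Least_equality) (use jn n0 n0min in auto)
        moreover have "take (Suc n0) (pref q j) = g" using jn g_def by (simp add: take_pref)
        ultimately show "q j = Tg g (pref q j)" unfolding \<sigma>_def by simp
      qed
      then have "f a q \<le> f a p" using T by blast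
      then show False using lt q_def by simp
    qed
  qed
qed

end

theorem corollary29:
  fixes d :: "'c::finite list \<Rightarrow> 'a::countable"
    and f :: "'a \<Rightarrow> (nat \<Rightarrow> 'c) \<Rightarrow> real"
  assumes "\<And>a p. 0 \<le> f a p \<and> f a p \<le> 1"
    and "\<And>a. upper_semicontinuous_map play_topology (f a)"
  shows "\<exists>\<sigma>. nash_equilibrium d f \<sigma>"
proof -
  interpret game d f using assms(2) by unfold_locales
  show ?thesis by (rule nash_exists)
qed


end
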